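(* Let $(G,*,\le)$ be a totally ordered commutative semigroup, let $n\ge 1$, and let $a_1,a_2,\ldots,a_{2n}\in G$ (not necessarily distinct) with $a_1\le a_2\le\cdots\le a_{2n}$. Let $N\in G$. Suppose there are indices $i_1,j_1,\ldots,i_n,j_n$ with $\{i_1,j_1,\ldots,i_n,j_n\}=\{1,2,\ldots,2n\}$ (so these $2n$ indices are pairwise distinct and each of $1,\ldots,2n$ is used exactly once) such that $$a_{i_k}*a_{j_k}>N\quad\text{for all }k=1,\ldots,n.$$ Then $$a_k*a_{2n+1-k}>N\quad\text{for all }k=1,\ldots,n,$$ i.e. $a_1*a_{2n}>N$, $a_2*a_{2n-1}>N$, $\ldots$, $a_n*a_{n+1}>N$.
   Context: A totally ordered commutative semigroup is a triple $(G,*,\le)$ where $(G,* )$ is a commutative semigroup (an associative, commutative binary operation $*$ on a set $G$) and $\le$ is a total order on $G$ such that for all $\alpha,\beta,\gamma,\delta\in G$: if $\alpha\le\beta$ and $\gamma\le\delta$ then $\alpha*\gamma\le\beta*\delta$. Here $x>y$ means $y\le x$ and $x\ne y$. *)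

theory Defs
  imports Main
begin

definition tocs :: "('a::linorder \<Rightarrow> 'a \<Rightarrow> 'a) \<Rightarrow> bool" where
  "tocs op \<longleftrightarrow>
     (\<forall>x y z. op (op x y) z = op x (op y z)) \<and>
     (\<forall>x y. op x y = op y x) \<and>
     (\<forall>\<alpha> \<beta> \<gamma> \<delta>. \<alpha> \<le> \<beta> \<and> \<gamma> \<le> \<delta> \<longrightarrow> op \<alpha> \<gamma> \<le> op \<beta> \<delta>)"

end

theory Submission
  imports Defs
begin

theorem theorem2p5:
  fixes op :: "'a::linorder \<Rightarrow> 'a \<Rightarrow> 'a"
    and n :: nat and a :: "nat \<Rightarrow> 'a" and N :: 'a
    and i j :: "nat \<Rightarrow> nat"
  assumes "tocs op"
    and "n \<ge> 1"
    and "\<And>k l. 1 \<le> k \<Longrightarrow> k \<le> l \<Longrightarrow> l \<le> 2 * n \<Longrightarrow> a k \<le> a l"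
    and "i ` {1..n} \<union> j ` {1..n} = {1..2 * n}"
    and "\<And>k. 1 \<le> k \<Longrightarrow> k \<le> n \<Longrightarrow> op (a (i k)) (a (j k)) > N"
  shows "\<forall>k \<in> {1..n}. op (a k) (a (2 * n + 1 - k)) > N"
proof
  fix k assume k: "k \<in> {1..n}"
  define I where "I = {1..n::nat}"
  have comm: "\<And>x y. op x y = op y x" and mono: "\<And>x y z w. x \<le> y \<Longrightarrow> z \<le> w \<Longrightarrow> op x z \<le> op y w"
    using assms(1) unfolding tocs_def by blast+
  have U: "i ` I \<union> j ` I = {1..2*n}" using assms(4) I_def by simp
  have "card I = n" by (simp add: I_def)
  have finI: "finite I" by (simp add: I_def)
  have ci: "card (i ` I) \<le> n" using card_image_le[of I i] I_def by simp
  have cj: "card (j ` I) \<le> n" using card_image_le[of I j] I_def by simp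
  have cu: "card (i ` I) + card (j ` I) = card (i ` I \<union> j ` I) + card (i ` I \<inter> j ` I)"
    by (rule card_Un_Int) (auto simp: I_def)
  hence "card (i ` I) + card (j ` I) = 2*n + card (i ` I \<inter> j ` I)" using U by simp
  hence ci': "card (i ` I) = card I" and cj': "card (j ` I) = card I" and dc: "card (i ` I \<inter> j ` I) = 0"
    using ci cj \<open>card I = n\<close> by linarith+
  have dis: "i ` I \<inter> j ` I = {}" using dc by (simp add: I_def)
  have inji: "inj_on i I" by (rule eq_card_imp_inj_on[OF finI ci'])
  have injj: "inj_on j I" by (rule eq_card_imp_inj_on[OF finI cj'])
  have rng: "\<And>m. m \<in> I \<Longrightarrow> 1 \<le> i m \<and> i m \<le> 2*n \<and> 1 \<le> j m \<and> j m \<le> 2*n"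
  proof -
    fix m assume "m \<in> I"
    hence "i m \<in> {1..2*n}" "j m \<in> {1..2*n}" using U by blast+
    thus "1 \<le> i m \<and> i m \<le> 2*n \<and> 1 \<le> j m \<and> j m \<le> 2*n" by simp
  qed
  show "op (a k) (a (2 * n + 1 - k)) > N"
  proof (rule ccontr)
    assume H: "\<not> ?thesis"
    have nogood: "\<not> ((i m \<le> k \<and> j m \<le> 2*n+1-k) \<or> (j m \<le> k \<and> i m \<le> 2*n+1-k))" if m: "m \<in> I" for m
    proof
      assume g: "(i m \<le> k \<and> j m \<le> 2*n+1-k) \<or> (j m \<le> k \<and> i m \<le> 2*n+1-k)"
      have N1: "N < op (a (i m)) (a (j m))" using assms(5) m I_def by auto
      from g show False
      proof
        assume g1: "i m \<le> k \<and> j m \<le> 2*n+1-k"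
        have "a (i m) \<le> a k" using assms(3)[of "i m" k] rng[OF m] g1 k by auto
        moreover have "a (j m) \<le> a (2*n+1-k)" using assms(3)[of "j m" "2*n+1-k"] rng[OF m] g1 k by auto
        ultimately have "op (a (i m)) (a (j m)) \<le> op (a k) (a (2*n+1-k))" by (rule mono)
        thus False using N1 H by auto
      next
        assume g1: "j m \<le> k \<and> i m \<le> 2*n+1-k"
        have "a (j m) \<le> a k" using assms(3)[of "j m" k] rng[OF m] g1 k by auto
        moreover have "a (i m) \<le> a (2*n+1-k)" using assms(3)[of "i m" "2*n+1-k"] rng[OF m] g1 k by auto
        ultimately have "op (a (j m)) (a (i m)) \<le> op (a k) (a (2*n+1-k))" by (rule mono)
        moreover have "op (a (i m)) (a (j m)) = op (a (j m)) (a (i m))" by (rule comm)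
        ultimately show False using N1 H by auto
      qed
    qed
    define X where "X = {m \<in> I. i m \<le> k \<or> j m \<le> k}"
    define g where "g m = (if i m \<le> k then i m else j m)" for m
    define f where "f m = (if i m \<le> k then j m else i m)" for m
    have finX: "finite X" by (simp add: X_def I_def)
    have "{1..k} \<subseteq> g ` X"
    proof
      fix p assume p: "p \<in> {1..k}"
      hence "p \<in> i ` I \<union> j ` I" using U k by auto
      then obtain m where m: "m \<in> I" "p = i m \<or> p = j m" by blast
      show "p \<in> g ` X"
      proof (cases "p = i m")
        case True thus ?thesis using p m unfolding X_def g_def by force
      next
        case False
        hence pj: "p = j m" using m by auto
        have "\<not> i m \<le> k" using nogood[OF m(1)] pj p k by auto
        thus ?thesis using p m pj unfolding X_def g_def by force
      qed
    qed
    hence "k \<le> card (g ` X)" using card_mono[OF finite_imageI[OF finX]] by fastforce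
    also have "\<dots> \<le> card X" using card_image_le[OF finX] .
    finally have c1: "k \<le> card X" .
    have "f ` X \<subseteq> {2*n+2-k..2*n}"
    proof
      fix q assume "q \<in> f ` X"
      then obtain m where m: "m \<in> X" "q = f m" by blast
      have mI: "m \<in> I" using m X_def by auto
      show "q \<in> {2*n+2-k..2*n}" using nogood[OF mI] rng[OF mI] m k unfolding X_def f_def by auto
    qed
    moreover have "inj_on f X"
    proof
      fix m1 m2 assume m1: "m1 \<in> X" and m2: "m2 \<in> X" and e: "f m1 = f m2"
      have I1: "m1 \<in> I" and I2: "m2 \<in> I" using m1 m2 X_def by auto
      show "m1 = m2"
      proof (cases "i m1 \<le> k"; cases "i m2 \<le> k")
        assume "i m1 \<le> k" "i m2 \<le> k" thus ?thesis using e injj I1 I2 f_def by (auto dest: inj_onD)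
      next
        assume "\<not> i m1 \<le> k" "\<not> i m2 \<le> k" thus ?thesis using e inji I1 I2 f_def by (auto dest: inj_onD)
      next
        assume "i m1 \<le> k" "\<not> i m2 \<le> k" thus ?thesis using e dis I1 I2 f_def by auto
      next
        assume "\<not> i m1 \<le> k" "i m2 \<le> k" thus ?thesis using e dis I1 I2 f_def by auto
      qed
    qed
    ultimately have "card X \<le> card {2*n+2-k..2*n}"
      using card_inj_on_le by blast
    also have "\<dots> = k - 1" using k by auto
    finally show False using c1 k by auto
  qed
qed

end
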